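(* Let $K$ be a field, $D=K[x,y]$, and let $f,g\in D$ be polynomials with zero constant term which are coprime (equivalently, they form a regular sequence in $D_{(x,y)}$). Then for every sufficiently large integer $N$, we have $\frac{x}{(fg)^N}\in R(D)$ and $\frac{y}{(fg)^N}\in R(D)$.
   Context: For an integral domain $D$ with fraction field $F$, the reciprocal complement $R(D)$ is the subring of $F$ generated by all $1/d$, $d\in D\setminus\{0\}$; equivalently the set of all finite sums $\sum_i 1/d_i$ with $d_i\in D\setminus\{0\}$. *)

theory Defs
  imports "HOL-Computational_Algebra.Polynomial_Factorial"
begin

definition reciprocal_complement :: "('a :: idom) fract set" where
  "reciprocal_complement =
     {sum_list (map (\<lambda>d. 1 / to_fract d) ds) | ds. \<forall>d \<in> set ds. d \<noteq> 0}"

text \<open>We model K[x,y] as K[x][y], i.e. the type 'a poly poly (outer variable y).\<close>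
definition var_x :: "('a :: comm_ring_1) poly poly" where
  "var_x = [:[:0, 1:]:]"

definition var_y :: "('a :: comm_ring_1) poly poly" where
  "var_y = [:0, 1:]"

definition const_term :: "('a :: comm_ring_1) poly poly \<Rightarrow> 'a" where
  "const_term f = coeff (coeff f 0) 0"

end

theory Submission
  imports Defs "HOL-Computational_Algebra.Field_as_Ring"
begin

abbreviation RC where "RC \<equiv> reciprocal_complement"

lemma RC_inv: "d \<noteq> 0 \<Longrightarrow> 1 / to_fract d \<in> RC"
  unfolding reciprocal_complement_def
  by (auto intro!: exI[of _ "[d]"])

lemma RC_0: "0 \<in> RC"
  unfolding reciprocal_complement_def
  by (auto intro!: exI[of _ "[]"])

lemma RC_add: "a \<in> RC \<Longrightarrow> b \<in> RC \<Longrightarrow> a + b \<in> RC"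
  unfolding reciprocal_complement_def
  apply clarify
  subgoal for ds es
    by (auto intro!: exI[of _ "ds @ es"])
  done

lemma sum_list_prod_aux:
  fixes h :: "'a::idom \<Rightarrow> 'a fract"
  assumes "\<And>d e. h d * h e = h (d * e)"
  shows "sum_list (map h ds) * sum_list (map h es) = sum_list (map h (concat (map (\<lambda>d. map (\<lambda>e. d * e) es) ds)))"
proof (induction ds)
  case Nil then show ?case by simp
next
  case (Cons d ds)
  have "sum_list (map h es) * h d = sum_list (map (\<lambda>e. h (d*e)) es)"
    by (induction es) (auto simp: algebra_simps assms[symmetric])
  then show ?case using Cons by (simp add: algebra_simps o_def)
qed

lemma RC_mult: "a \<in> RC \<Longrightarrow> b \<in> RC \<Longrightarrow> a * b \<in> RC"
  unfolding reciprocal_complement_def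
  apply clarify
  subgoal for ds es
    apply (rule exI[of _ "concat (map (\<lambda>d. map (\<lambda>e. d * e) es) ds)"])
    apply (rule conjI)
     apply (rule sum_list_prod_aux[where h="\<lambda>d. 1 / to_fract d"])
     apply simp
    apply auto
    done
  done

lemma RC_sum: "finite A \<Longrightarrow> (\<And>x. x \<in> A \<Longrightarrow> F x \<in> RC) \<Longrightarrow> sum F A \<in> RC"
  by (induction A rule: finite_induct) (auto intro: RC_0 RC_add)

lemma RC_const: "to_fract [:[:c::'k::field:]:] \<in> RC"
proof (cases "c = 0")
  case True then show ?thesis using RC_0 by simp
next
  case False
  have "to_fract [:[:c:]:] = 1 / to_fract [:[:1/c:]:]"
    using False by (simp add: eq_divide_eq to_fract_mult[symmetric] one_pCons[symmetric] del: to_fract_mult)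
  then show ?thesis using RC_inv[of "[:[:1/c:]:]"] False by simp
qed

lemma linalg:
  fixes \<phi> \<gamma> :: "'k::field poly"
  shows "\<exists>m c. (\<exists>i<m. \<exists>j<m. c i j \<noteq> 0) \<and>
     (\<Sum>i<m. \<Sum>j<m. smult (c i j) (\<phi>^i * \<gamma>^j)) = 0"
proof -
  interpret pv: vector_space "smult :: 'k \<Rightarrow> 'k poly \<Rightarrow> 'k poly"
    by unfold_locales (auto simp: smult_add_right smult_add_left)
  define d where "d = max (degree \<phi>) (degree \<gamma>)"
  define m where "m = 2*d+2"
  define L where "L = 2*m*d"
  define w where "w = (\<lambda>(i,j). \<phi>^i * \<gamma>^j)"
  define I where "I = {..<m} \<times> {..<m}"
  have finI: "finite I" unfolding I_def by simp
  have cardI: "card I = m*m" unfolding I_def by (simp add: card_cartesian_product)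
  have big: "L + 1 < m * m" unfolding L_def m_def by (simp add: algebra_simps)
  have sumconv: "(\<Sum>i<m. \<Sum>j<m. smult (c i j) (\<phi>^i * \<gamma>^j)) = (\<Sum>x\<in>I. smult (case_prod c x) (w x))" for c
    unfolding I_def w_def by (simp add: sum.cartesian_product case_prod_beta)
  have degw: "degree (w x) \<le> L" if xI: "x \<in> I" for x
  proof -
    obtain i j where x: "x = (i,j)" "i < m" "j < m" using xI unfolding I_def by blast
    have "degree (w x) \<le> degree (\<phi>^i) + degree (\<gamma>^j)" unfolding x w_def by (simp add: degree_mult_le)
    also have "\<dots> \<le> degree \<phi> * i + degree \<gamma> * j" by (intro add_mono degree_power_le)
    also have "\<dots> \<le> d * m + d * m" using x unfolding d_def
      by (intro add_mono mult_mono) auto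
    finally show ?thesis unfolding L_def by (simp add: algebra_simps)
  qed
  have span: "p \<in> pv.span ((\<lambda>k. monom 1 k) ` {..L})" if "degree p \<le> L" for p
  proof -
    have "p = (\<Sum>k\<le>L. smult (coeff p k) (monom 1 k))"
      using poly_as_sum_of_monoms'[OF that] by (simp add: smult_monom)
    also have "\<dots> \<in> pv.span ((\<lambda>k. monom 1 k) ` {..L})"
      by (intro pv.span_sum pv.span_scale pv.span_base) auto
    finally show ?thesis .
  qed
  show ?thesis
  proof (cases "inj_on w I")
    case False
    then obtain p p' where pp: "p \<in> I" "p' \<in> I" "p \<noteq> p'" "w p = w p'"
      unfolding inj_on_def by blast
    define c where "c = (\<lambda>i j. (if (i,j) = p then 1 else 0) - (if (i,j) = p' then 1 else (0::'k)))"
    have "(\<Sum>x\<in>I. smult (case_prod c x) (w x)) = (\<Sum>x\<in>I. (if x = p then w x else 0)) - (\<Sum>x\<in>I. (if x = p' then w x else 0))"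
      unfolding sum_subtractf[symmetric]
    proof (rule sum.cong)
      fix x assume "x \<in> I"
      show "smult (case_prod c x) (w x) = (if x = p then w x else 0) - (if x = p' then w x else 0)"
        using pp(3) unfolding c_def case_prod_beta by (cases "x = p"; cases "x = p'") simp_all
    qed simp
    also have "\<dots> = 0" using pp(1,2,4) finI by (simp add: sum.delta)
    finally have "(\<Sum>x\<in>I. smult (case_prod c x) (w x)) = 0" .
    moreover have "c (fst p) (snd p) \<noteq> 0" using pp unfolding c_def by auto
    moreover have "fst p < m" "snd p < m" using pp(1) unfolding I_def by auto
    ultimately have "(\<exists>i<m. \<exists>j<m. c i j \<noteq> 0) \<and> (\<Sum>i<m. \<Sum>j<m. smult (c i j) (\<phi>^i * \<gamma>^j)) = 0"
      unfolding sumconv by blast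
    then show ?thesis by blast
  next
    case True
    have "\<not> pv.independent (w ` I)"
    proof
      assume ind: "pv.independent (w ` I)"
      have "w ` I \<subseteq> pv.span ((\<lambda>k. monom 1 k) ` {..L})" using span degw by auto
      from pv.independent_span_bound[OF _ ind this]
      have "card (w ` I) \<le> card ((\<lambda>k. monom 1 k :: 'k poly) ` {..L})" by simp
      also have "\<dots> \<le> L + 1" using card_image_le[of "{..L}"] by simp
      finally show False using card_image[OF True] cardI big by simp
    qed
    then obtain t u where tu: "finite t" "t \<subseteq> w ` I" "(\<Sum>v\<in>t. smult (u v) v) = 0" "\<exists>v\<in>t. u v \<noteq> 0"
      unfolding pv.dependent_explicit by blast
    define c where "c = (\<lambda>i j. if w (i,j) \<in> t then u (w (i,j)) else 0)"
    define J where "J = I \<inter> w -` t"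
    have tJ: "t = w ` J" using tu(2) unfolding J_def by auto
    have injJ: "inj_on w J" using True unfolding J_def by (auto intro: inj_on_subset)
    have "(\<Sum>x\<in>I. smult (case_prod c x) (w x)) = (\<Sum>x\<in>J. smult (u (w x)) (w x))"
      unfolding c_def J_def using finI
      by (intro sum.mono_neutral_cong_right) (auto simp: case_prod_beta)
    also have "\<dots> = (\<Sum>v\<in>t. smult (u v) v)" unfolding tJ by (simp add: sum.reindex[OF injJ])
    finally have "(\<Sum>x\<in>I. smult (case_prod c x) (w x)) = 0" using tu(3) by simp
    moreover obtain v where "v \<in> t" "u v \<noteq> 0" using tu(4) by blast
    then obtain i j where "(i,j) \<in> I" "w (i,j) = v" using tu(2) by auto
    then have "i < m" "j < m" "c i j \<noteq> 0" using \<open>v \<in> t\<close> \<open>u v \<noteq> 0\<close> unfolding I_def c_def by auto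
    ultimately have "(\<exists>i<m. \<exists>j<m. c i j \<noteq> 0) \<and> (\<Sum>i<m. \<Sum>j<m. smult (c i j) (\<phi>^i * \<gamma>^j)) = 0"
      unfolding sumconv by blast
    then show ?thesis by blast
  qed
qed

typedef 'a fw = "UNIV :: 'a set" by simp

lemmas fw_simps = Abs_fw_inverse[OF UNIV_I] Rep_fw_inverse Rep_fw_inject[symmetric]

instantiation fw :: (field) field
begin
definition "0 = Abs_fw 0"
definition "1 = Abs_fw 1"
definition "a + b = Abs_fw (Rep_fw a + Rep_fw b)"
definition "a - b = Abs_fw (Rep_fw a - Rep_fw b)"
definition "- a = Abs_fw (- Rep_fw a)"
definition "a * b = Abs_fw (Rep_fw a * Rep_fw b)"
definition "inverse a = Abs_fw (inverse (Rep_fw a))"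
definition "a div b = Abs_fw (Rep_fw a / Rep_fw b)"
instance
  by standard (simp_all add: zero_fw_def one_fw_def plus_fw_def minus_fw_def uminus_fw_def
     times_fw_def inverse_fw_def divide_fw_def fw_simps algebra_simps divide_inverse)
end

instantiation fw :: (field)
  "{unique_euclidean_ring, normalization_euclidean_semiring, normalization_semidom_multiplicative}"
begin
definition [simp]: "normalize_fw = (normalize_field :: 'a fw \<Rightarrow> _)"
definition [simp]: "unit_factor_fw = (unit_factor_field :: 'a fw \<Rightarrow> _)"
definition [simp]: "modulo_fw = (mod_field :: 'a fw \<Rightarrow> _)"
definition [simp]: "euclidean_size_fw = (euclidean_size_field :: 'a fw \<Rightarrow> _)"
definition [simp]: "division_segment (x :: 'a fw) = 1"
instance
  by standard
    (simp_all add: dvd_field_iff field_split_simps split: if_splits)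
end

instantiation fw :: (field) euclidean_ring_gcd
begin
definition gcd_fw :: "'a fw \<Rightarrow> 'a fw \<Rightarrow> 'a fw" where
  "gcd_fw = Euclidean_Algorithm.gcd"
definition lcm_fw :: "'a fw \<Rightarrow> 'a fw \<Rightarrow> 'a fw" where
  "lcm_fw = Euclidean_Algorithm.lcm"
definition Gcd_fw :: "'a fw set \<Rightarrow> 'a fw" where
 "Gcd_fw = Euclidean_Algorithm.Gcd"
definition Lcm_fw :: "'a fw set \<Rightarrow> 'a fw" where
 "Lcm_fw = Euclidean_Algorithm.Lcm"
instance by standard (simp_all add: gcd_fw_def lcm_fw_def Gcd_fw_def Lcm_fw_def)
end

instance fw :: (field) field_gcd ..

lemma ct_mult: "const_term (a * b) = const_term a * const_term b"
  unfolding const_term_def by (simp add: coeff_mult_0)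
lemma ct_add: "const_term (a + b) = const_term a + const_term b"
  unfolding const_term_def by simp
lemma ct_C: "const_term [:[:c:]:] = c"
  unfolding const_term_def by simp
lemma ct_power: "const_term (a ^ n) = const_term a ^ n"
proof (induction n)
  case 0 then show ?case by (simp add: const_term_def)
next
  case (Suc n) then show ?case by (simp add: ct_mult)
qed

lemma ct_dvd: "f dvd h \<Longrightarrow> const_term f = 0 \<Longrightarrow> const_term h = 0"
  by (auto simp: ct_mult elim!: dvdE)

lemma indepA:
  fixes f g :: "'k::field_gcd poly poly"
  assumes cop: "coprime f g" and cf: "const_term f = 0" and cg: "const_term g = 0"
  shows "f dvd (\<Sum>j<n. [:[:c j:]:] * g^j) \<Longrightarrow> \<forall>j<n. c j = 0"
proof (induction n arbitrary: c)
  case 0 then show ?case by simp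
next
  case (Suc n)
  have eq: "(\<Sum>j<Suc n. [:[:c j:]:] * g^j) = [:[:c 0:]:] + g * (\<Sum>j<n. [:[:c (Suc j):]:] * g^j)"
    unfolding sum.lessThan_Suc_shift by (simp add: sum_distrib_left algebra_simps del: sum.lessThan_Suc)
  have "const_term (\<Sum>j<Suc n. [:[:c j:]:] * g^j) = 0" using ct_dvd[OF Suc.prems cf] .
  then have c0: "c 0 = 0" unfolding eq by (simp add: ct_add ct_mult ct_C cg)
  then have "f dvd g * (\<Sum>j<n. [:[:c (Suc j):]:] * g^j)" using Suc.prems eq by simp
  then have "f dvd (\<Sum>j<n. [:[:c (Suc j):]:] * g^j)"
    using coprime_dvd_mult_right_iff[OF cop] by simp
  from Suc.IH[OF this] have "\<forall>j<n. c (Suc j) = 0" .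
  with c0 show ?case by (auto simp: less_Suc_eq_0_disj)
qed

lemma indepB:
  fixes f g :: "'k::field_gcd poly poly"
  assumes cop: "coprime f g" and cf: "const_term f = 0" and cg: "const_term g = 0" and f0: "f \<noteq> 0"
  shows "(\<Sum>i<n. f^i * (\<Sum>j<m. [:[:c i j:]:] * g^j)) = 0 \<Longrightarrow> \<forall>i<n. \<forall>j<m. c i j = 0"
proof (induction n arbitrary: c)
  case 0 then show ?case by simp
next
  case (Suc n)
  define S0 where "S0 = (\<Sum>j<m. [:[:c 0 j:]:] * g^j)"
  define Rs where "Rs = (\<Sum>i<n. f^i * (\<Sum>j<m. [:[:c (Suc i) j:]:] * g^j))"
  have eq: "(\<Sum>i<Suc n. f^i * (\<Sum>j<m. [:[:c i j:]:] * g^j)) = S0 + f * Rs"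
    unfolding S0_def Rs_def sum.lessThan_Suc_shift by (simp add: sum_distrib_left algebra_simps del: sum.lessThan_Suc)
  have "S0 = - (f * Rs)" using Suc.prems eq by (simp add: eq_neg_iff_add_eq_0)
  then have "f dvd S0" by simp
  from indepA[OF cop cf cg this[unfolded S0_def]] have c0: "\<forall>j<m. c 0 j = 0" .
  then have "S0 = 0" unfolding S0_def by simp
  then have "Rs = 0" using Suc.prems eq f0 by simp
  from Suc.IH[OF this[unfolded Rs_def]] have "\<forall>i<n. \<forall>j<m. c (Suc i) j = 0" .
  with c0 show ?case by (auto simp: less_Suc_eq_0_disj)
qed


lemma hom_sum:
  assumes "h 0 = 0" "\<And>a b. h (a + b) = h a + h b"
  shows "h (sum F A) = (\<Sum>x\<in>A. h (F x))"
proof (cases "finite A")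
  case True then show ?thesis by (induction A rule: finite_induct) (auto simp: assms)
qed (simp add: assms)

lemma map_poly_hom_add:
  assumes "h 0 = 0" "\<And>a b. h (a + b) = h a + h b"
  shows "map_poly h (p + q) = map_poly h p + map_poly h q"
  by (rule poly_eqI) (simp add: coeff_map_poly assms)

lemma map_poly_hom_mult:
  assumes h0: "h 0 = 0" and ha: "\<And>a b. h (a + b) = h a + h b" and hm: "\<And>a b. h (a * b) = h a * h b"
  shows "map_poly h (p * q) = map_poly h p * map_poly h q"
proof (rule poly_eqI)
  fix n
  show "coeff (map_poly h (p * q)) n = coeff (map_poly h p * map_poly h q) n"
    by (simp add: coeff_map_poly h0 coeff_mult hom_sum[of h, OF h0 ha] hm)
qed

definition Phi :: "'k::field poly poly \<Rightarrow> 'k fw poly poly" where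
  "Phi = map_poly (map_poly Abs_fw)"
definition Psi :: "'k::field fw poly poly \<Rightarrow> 'k poly poly" where
  "Psi = map_poly (map_poly Rep_fw)"

lemma Abs_fw_0: "Abs_fw 0 = 0" by (simp add: zero_fw_def)
lemma Rep_fw_0: "Rep_fw 0 = 0" by (simp add: zero_fw_def fw_simps)
lemma Abs_fw_add: "Abs_fw (a + b) = Abs_fw a + Abs_fw b" by (simp add: plus_fw_def fw_simps)
lemma Abs_fw_mult: "Abs_fw (a * b) = Abs_fw a * Abs_fw b" by (simp add: times_fw_def fw_simps)
lemma Rep_fw_add: "Rep_fw (a + b) = Rep_fw a + Rep_fw b" by (simp add: plus_fw_def fw_simps)
lemma Rep_fw_mult: "Rep_fw (a * b) = Rep_fw a * Rep_fw b" by (simp add: times_fw_def fw_simps)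

lemma Phi_add: "Phi (a + b) = Phi a + Phi b"
  unfolding Phi_def by (intro map_poly_hom_add) (auto intro: map_poly_hom_add simp: Abs_fw_0 Abs_fw_add)
lemma Phi_mult: "Phi (a * b) = Phi a * Phi b"
  unfolding Phi_def
  by (intro map_poly_hom_mult map_poly_hom_add) (auto intro: map_poly_hom_add map_poly_hom_mult simp: Abs_fw_0 Abs_fw_add Abs_fw_mult)
lemma Psi_add: "Psi (a + b) = Psi a + Psi b"
  unfolding Psi_def by (intro map_poly_hom_add) (auto intro: map_poly_hom_add simp: Rep_fw_0 Rep_fw_add)
lemma Psi_mult: "Psi (a * b) = Psi a * Psi b"
  unfolding Psi_def
  by (intro map_poly_hom_mult map_poly_hom_add) (auto intro: map_poly_hom_add map_poly_hom_mult simp: Rep_fw_0 Rep_fw_add Rep_fw_mult)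
lemma Phi_0: "Phi 0 = 0" unfolding Phi_def by simp
lemma Phi_1: "Phi 1 = 1" unfolding Phi_def by (simp add: Abs_fw_0 one_fw_def)
lemma Psi_Phi: "Psi (Phi p) = p"
  unfolding Psi_def Phi_def by (subst map_poly_map_poly) (auto simp: Abs_fw_0 Rep_fw_0 o_def map_poly_map_poly fw_simps)
lemma Phi_Psi: "Phi (Psi p) = p"
  unfolding Psi_def Phi_def by (subst map_poly_map_poly) (auto simp: Abs_fw_0 Rep_fw_0 o_def map_poly_map_poly fw_simps)
lemma Phi_power: "Phi (a ^ n) = Phi a ^ n"
  by (induction n) (auto simp: Phi_1 Phi_mult)
lemma Phi_sum: "Phi (sum F A) = (\<Sum>x\<in>A. Phi (F x))"
  by (rule hom_sum) (auto simp: Phi_0 Phi_add)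
lemma Phi_C: "Phi [:[:c:]:] = [:[:Abs_fw c:]:]"
  unfolding Phi_def by (auto intro!: poly_eqI simp: coeff_map_poly Abs_fw_0 coeff_pCons split: nat.split)
lemma Phi_ct: "const_term (Phi f) = Abs_fw (const_term f)"
  unfolding Phi_def const_term_def by (simp add: coeff_map_poly Abs_fw_0)
lemma Phi_inj: "Phi a = Phi b \<Longrightarrow> a = b"
  by (metis Psi_Phi)

lemma Phi_coprime:
  assumes "coprime f g"
  shows "coprime (Phi f) (Phi g)"
proof (rule coprimeI)
  fix c assume "c dvd Phi f" "c dvd Phi g"
  then obtain k l where "Phi f = c * k" "Phi g = c * l" by (auto elim!: dvdE)
  then have "f = Psi c * Psi k" "g = Psi c * Psi l" by (metis Psi_Phi Psi_mult)+
  then have "Psi c dvd f" "Psi c dvd g" by auto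
  with assms have "is_unit (Psi c)" by (auto dest: coprime_common_divisor)
  then obtain u where "1 = Psi c * u" by (auto elim!: dvdE)
  then have "1 = c * Phi u" by (metis Phi_1 Phi_Psi Phi_mult)
  then show "is_unit c" by (auto intro: dvdI)
qed

lemma indep:
  fixes f g :: "'k::field poly poly"
  assumes cop: "coprime f g" and cf: "const_term f = 0" and cg: "const_term g = 0" and f0: "f \<noteq> 0"
    and eq: "(\<Sum>i<n. f^i * (\<Sum>j<m. [:[:c i j:]:] * g^j)) = 0"
  shows "\<forall>i<n. \<forall>j<m. c i j = 0"
proof -
  have "Phi (\<Sum>i<n. f^i * (\<Sum>j<m. [:[:c i j:]:] * g^j)) = 0" using eq Phi_0 by simp
  then have "(\<Sum>i<n. Phi f ^ i * (\<Sum>j<m. [:[:Abs_fw (c i j):]:] * Phi g ^ j)) = 0"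
    unfolding Phi_sum Phi_mult Phi_power Phi_C .
  moreover have "Phi f \<noteq> 0" using f0 Phi_inj Phi_0 by metis
  moreover have "const_term (Phi f) = 0" "const_term (Phi g) = 0" using cf cg by (simp_all add: Phi_ct Abs_fw_0)
  ultimately have "\<forall>i<n. \<forall>j<m. Abs_fw (c i j) = 0"
    using indepB[OF Phi_coprime[OF cop], where c="\<lambda>i j. Abs_fw (c i j)"] by blast
  then show ?thesis by (metis Abs_fw_0 Abs_fw_inject UNIV_I)
qed

lemma to_fract_power: "to_fract (a ^ n) = to_fract a ^ n"
  by (induction n) auto

lemma generic:
  fixes f g z :: "'k::field poly poly" and \<psi> :: "'k poly poly \<Rightarrow> 'k poly"
  assumes cop: "coprime f g" and cf: "const_term f = 0" and cg: "const_term g = 0"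
    and f0: "f \<noteq> 0" and g0: "g \<noteq> 0"
    and hadd: "\<And>a b. \<psi> (a + b) = \<psi> a + \<psi> b"
    and hmul: "\<And>a b. \<psi> (a * b) = \<psi> a * \<psi> b"
    and h0: "\<psi> 0 = 0" and h1: "\<psi> 1 = 1" and hC: "\<And>c. \<psi> [:[:c:]:] = [:c:]"
    and ker: "\<And>h. \<psi> h = 0 \<Longrightarrow> z dvd h"
  shows "\<exists>N0. \<forall>N\<ge>N0. to_fract z / to_fract ((f * g) ^ N) \<in> RC"
proof -
  have hpow: "\<psi> (a ^ n) = \<psi> a ^ n" for a n by (induction n) (auto simp: h1 hmul)
  obtain m c where c: "\<exists>i<m. \<exists>j<m. c i j \<noteq> 0"
    and rel: "(\<Sum>i<m. \<Sum>j<m. smult (c i j) (\<psi> f ^ i * \<psi> g ^ j)) = 0"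
    using linalg[of "\<psi> f" "\<psi> g"] by blast
  define H where "H = (\<Sum>i<m. f^i * (\<Sum>j<m. [:[:c i j:]:] * g^j))"
  have "\<psi> H = (\<Sum>i<m. \<psi> f ^ i * (\<Sum>j<m. [:c i j:] * \<psi> g ^ j))"
    unfolding H_def hom_sum[of \<psi>, OF h0 hadd] hmul hpow hC ..
  also have "\<dots> = (\<Sum>i<m. \<Sum>j<m. smult (c i j) (\<psi> f ^ i * \<psi> g ^ j))"
    by (simp add: sum_distrib_left algebra_simps)
  finally have "\<psi> H = 0" using rel by simp
  then obtain q where Hq: "H = z * q" using ker by (auto elim!: dvdE)
  have "H \<noteq> 0"
  proof
    assume "H = 0"
    then have "\<forall>i<m. \<forall>j<m. c i j = 0" using indep[OF cop cf cg f0] unfolding H_def by blast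
    then show False using c by blast
  qed
  then have q0: "q \<noteq> 0" using Hq by auto
  show ?thesis
  proof (intro exI allI impI)
    fix N assume N: "m \<le> N"
    define F where "F = to_fract f"
    define G where "G = to_fract g"
    have F0: "F \<noteq> 0" and G0: "G \<noteq> 0" using f0 g0 by (auto simp: F_def G_def)
    have trm: "to_fract [:[:c i j:]:] * (1 / to_fract (f^(N-i) * g^(N-j))) =
        to_fract [:[:c i j:]:] * F^i * G^j / (F * G)^N" if "i < m" "j < m" for i j
    proof -
      have "F^N = F^(N-i) * F^i" using that N by (simp flip: power_add)
      moreover have "G^N = G^(N-j) * G^j" using that N by (simp flip: power_add)
      ultimately show ?thesis using F0 G0
        by (simp add: to_fract_power F_def[symmetric] G_def[symmetric] power_mult_distrib field_simps)
    qed
    have "to_fract z / to_fract ((f * g) ^ N) = (1 / to_fract q) * (to_fract H / (F * G)^N)"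
      using q0 by (simp add: Hq F_def G_def to_fract_power power_mult_distrib)
    also have "to_fract H = (\<Sum>i<m. \<Sum>j<m. to_fract [:[:c i j:]:] * F^i * G^j)"
      unfolding H_def to_fract_sum to_fract_mult to_fract_power F_def G_def
      by (simp add: sum_distrib_left mult_ac)
    also have "\<dots> / (F * G)^N = (\<Sum>i<m. \<Sum>j<m. to_fract [:[:c i j:]:] * (1 / to_fract (f^(N-i) * g^(N-j))))"
      unfolding sum_divide_distrib
      by (intro sum.cong refl, rule trm[symmetric]) auto
    finally have eq: "to_fract z / to_fract ((f * g) ^ N) = 1 / to_fract q * (\<Sum>i<m. \<Sum>j<m. to_fract [:[:c i j:]:] * (1 / to_fract (f^(N-i) * g^(N-j))))" .
    show "to_fract z / to_fract ((f * g) ^ N) \<in> RC"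
      unfolding eq
      using f0 g0 q0
      by (intro RC_mult RC_inv RC_sum RC_const) auto
  qed
qed

lemma ct_unit:
  assumes "is_unit (g :: 'k::field poly poly)" "const_term g = 0" shows False
proof -
  obtain u where "1 = g * u" using assms(1) by (auto elim!: dvdE)
  then have "const_term (1 :: 'k poly poly) = const_term g * const_term u" by (metis ct_mult)
  moreover have "const_term (1 :: 'k poly poly) = 1" by (simp add: const_term_def)
  ultimately show False using assms(2) by simp
qed

lemma var_x_dvd:
  fixes h :: "'k::field poly poly"
  assumes "map_poly (\<lambda>c. poly c 0) h = 0"
  shows "var_x dvd h"
proof -
  have d: "[:0,1:] dvd coeff h k" for k
  proof -
    have "poly (coeff h k) 0 = 0" using arg_cong[OF assms, of "\<lambda>p. coeff p k"] by (simp add: coeff_map_poly)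
    then show ?thesis using poly_eq_0_iff_dvd[of "coeff h k" 0] by simp
  qed
  have d': "pCons 0 (coeff h k div [:0,1:]) = coeff h k" for k
    using dvd_mult_div_cancel[OF d[of k]] by simp
  have "h = var_x * map_poly (\<lambda>c. c div [:0,1:]) h"
    unfolding var_x_def
    by (rule poly_eqI) (simp add: coeff_map_poly d')
  then show ?thesis by (rule dvdI)
qed

theorem mainTheorem4:
  fixes f g :: "('k :: field) poly poly"
  assumes "const_term f = 0" and "const_term g = 0"
    and "coprime f g"
  shows "\<exists>N0::nat. \<forall>N\<ge>N0.
           to_fract var_x / to_fract ((f * g) ^ N) \<in> reciprocal_complement \<and>
           to_fract var_y / to_fract ((f * g) ^ N) \<in> reciprocal_complement"
proof -
  note cf = assms(1) and cg = assms(2) and cop = assms(3)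
  have f0: "f \<noteq> 0"
  proof
    assume "f = 0" then have "is_unit g" using cop by simp
    then show False using ct_unit cg by blast
  qed
  have g0: "g \<noteq> 0"
  proof
    assume "g = 0" then have "is_unit f" using cop by simp
    then show False using ct_unit cf by blast
  qed
  have X: "\<exists>N0. \<forall>N\<ge>N0. to_fract var_x / to_fract ((f * g) ^ N) \<in> RC"
  proof (rule generic[OF cop cf cg f0 g0, where \<psi>="map_poly (\<lambda>c. poly c 0)"])
    show "map_poly (\<lambda>c. poly c 0) (a + b) = map_poly (\<lambda>c. poly c 0) a + map_poly (\<lambda>c. poly c 0) b" for a b :: "'k poly poly"
      by (rule map_poly_hom_add) auto
    show "map_poly (\<lambda>c. poly c 0) (a * b) = map_poly (\<lambda>c. poly c 0) a * map_poly (\<lambda>c. poly c 0) b" for a b :: "'k poly poly"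
      by (rule map_poly_hom_mult) auto
    show "map_poly (\<lambda>c. poly c 0) (0 :: 'k poly poly) = 0" by simp
    show "map_poly (\<lambda>c. poly c 0) (1 :: 'k poly poly) = 1" by simp
    show "map_poly (\<lambda>c. poly c 0) [:[:c:]:] = [:c:]" for c :: 'k
      by (auto intro!: poly_eqI simp: coeff_map_poly coeff_pCons split: nat.split)
    show "var_x dvd h" if "map_poly (\<lambda>c. poly c 0) h = 0" for h :: "'k poly poly"
      using var_x_dvd[OF that] .
  qed
  have Y: "\<exists>N0. \<forall>N\<ge>N0. to_fract var_y / to_fract ((f * g) ^ N) \<in> RC"
  proof (rule generic[OF cop cf cg f0 g0, where \<psi>="\<lambda>h. poly h 0"])
    show "var_y dvd h" if "poly h 0 = 0" for h :: "'k poly poly"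
      using that poly_eq_0_iff_dvd[of h 0] unfolding var_y_def by simp
  qed auto
  from X Y obtain N1 N2 where
    "\<forall>N\<ge>N1. to_fract var_x / to_fract ((f * g) ^ N) \<in> RC"
    "\<forall>N\<ge>N2. to_fract var_y / to_fract ((f * g) ^ N) \<in> RC" by blast
  then show ?thesis by (intro exI[of _ "max N1 N2"]) auto
qed

end
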